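(* Fix a constant $0<\alpha<1$. For $D\le \alpha n$, the minimum size of advice sufficient to perform topology recognition in time $D$ in the class of graphs of size $n$ and diameter $D$ is in $\Theta(n\log n)$ (the upper bound holds for labeled topology recognition and the lower bound for anonymous topology recognition), with constants depending only on $\alpha$.
   Context: Graphs are finite, simple, undirected, connected, with no node labels; at each node of degree $d$ the incident edges carry distinct port numbers $0,\dots,d-1$ (no coherence between endpoints). Isomorphism is a bijection of nodes preserving edges and port numbers at both endpoints. Size = number of nodes; $\log$ is base 2. Communication model (LOCAL): synchronous rounds, all nodes start simultaneously; in each round every node may send arbitrary messages to all neighbours, receives their messages (knowing the arrival port), and performs arbitrary local computation. Initially a node knows only its degree and its advice. Advice: an oracle knowing the graph assigns each node a binary string; the size of advice is the maximum string length. All nodes run the same deterministic algorithm. Anonymous topology recognition: every node outputs a port-labeled graph isomorphic to $G$. Labeled topology recognition: all nodes output the same port-labeled graph $H$ with distinct node labels and each node its own label, such that some isomorphism $G\to H$ maps every node to the node carrying the label it output. The minimum size of advice sufficient for time $T$ on a class is the least $s$ such that some deterministic algorithm and, for each graph of the class, some advice assignment of size at most $s$ accomplish the task within $T$ rounds on every graph of the class. *)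

theory Defs
  imports Complex_Main
begin

text \<open>A port-labeled graph with n nodes is represented canonically as a list g of length n;
  the nodes are 0..<n, the degree of node v is length (g!v), and g!v!p is the neighbour of v
  reached through port p (0 \<le> p < deg v).\<close>

type_synonym pgraph = "nat list list"

definition pg_edges :: "pgraph \<Rightarrow> (nat \<times> nat) set" where
  "pg_edges g = {(u, v). u < length g \<and> v \<in> set (g ! u)}"

definition wf_pgraph :: "pgraph \<Rightarrow> bool" where
  "wf_pgraph g \<longleftrightarrow> length g \<ge> 1 \<and>
     (\<forall>v < length g. distinct (g ! v) \<and>
        (\<forall>u \<in> set (g ! v). u < length g \<and> u \<noteq> v \<and> v \<in> set (g ! u))) \<and>
     (\<forall>u < length g. \<forall>v < length g. (u, v) \<in> (pg_edges g)\<^sup>*)"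

definition pg_dist :: "pgraph \<Rightarrow> nat \<Rightarrow> nat \<Rightarrow> nat" where
  "pg_dist g u v = (LEAST k. (u, v) \<in> (pg_edges g) ^^ k)"

definition diameter :: "pgraph \<Rightarrow> nat" where
  "diameter g = Max {pg_dist g u v | u v. u < length g \<and> v < length g}"

definition port :: "pgraph \<Rightarrow> nat \<Rightarrow> nat \<Rightarrow> nat" where
  "port g u v = (THE q. q < length (g ! u) \<and> g ! u ! q = v)"

definition pg_iso_map :: "(nat \<Rightarrow> nat) \<Rightarrow> pgraph \<Rightarrow> pgraph \<Rightarrow> bool" where
  "pg_iso_map f g h \<longleftrightarrow> bij_betw f {0..<length g} {0..<length h} \<and>
     (\<forall>v < length g. h ! (f v) = map f (g ! v))"

definition pg_isomorphic :: "pgraph \<Rightarrow> pgraph \<Rightarrow> bool" where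
  "pg_isomorphic g h \<longleftrightarrow> (\<exists>f. pg_iso_map f g h)"

definition graph_class :: "nat \<Rightarrow> nat \<Rightarrow> pgraph set" where
  "graph_class n D = {g. wf_pgraph g \<and> length g = n \<and> diameter g = D}"

text \<open>Universal type of finite data used for local states and messages.\<close>
datatype sexp = SNat nat | SBits "bool list" | SList "sexp list"

text \<open>A deterministic algorithm (the same at all nodes): initial state from degree and advice;
  message sent on each port in the current state; new state from the old state and the list
  of received messages indexed by arrival port; output function.\<close>
record 'o local_alg =
  init :: "nat \<Rightarrow> bool list \<Rightarrow> sexp"
  send :: "sexp \<Rightarrow> nat \<Rightarrow> sexp"
  step :: "sexp \<Rightarrow> sexp list \<Rightarrow> sexp"
  out :: "sexp \<Rightarrow> 'o"

primrec run :: "'o local_alg \<Rightarrow> pgraph \<Rightarrow> (nat \<Rightarrow> bool list) \<Rightarrow> nat \<Rightarrow> nat \<Rightarrow> sexp" where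
  "run A g adv 0 = (\<lambda>v. init A (length (g ! v)) (adv v))"
| "run A g adv (Suc t) = (\<lambda>v. step A (run A g adv t v)
      (map (\<lambda>u. send A (run A g adv t u) (port g u v)) (g ! v)))"

definition advice_size :: "pgraph \<Rightarrow> (nat \<Rightarrow> bool list) \<Rightarrow> nat" where
  "advice_size g adv = Max ((\<lambda>v. length (adv v)) ` {0..<length g})"

definition anon_TR :: "pgraph local_alg \<Rightarrow> pgraph \<Rightarrow> (nat \<Rightarrow> bool list) \<Rightarrow> nat \<Rightarrow> bool" where
  "anon_TR A g adv T \<longleftrightarrow>
     (\<forall>v < length g. pg_isomorphic g (out A (run A g adv T v)))"

definition labeled_TR :: "(pgraph \<times> nat) local_alg \<Rightarrow> pgraph \<Rightarrow> (nat \<Rightarrow> bool list) \<Rightarrow> nat \<Rightarrow> bool" where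
  "labeled_TR A g adv T \<longleftrightarrow>
     (\<exists>H f. pg_iso_map f g H \<and> (\<forall>v < length g. out A (run A g adv T v) = (H, f v)))"

definition min_advice ::
  "('o local_alg \<Rightarrow> pgraph \<Rightarrow> (nat \<Rightarrow> bool list) \<Rightarrow> nat \<Rightarrow> bool) \<Rightarrow> nat \<Rightarrow> pgraph set \<Rightarrow> nat" where
  "min_advice task T C = (LEAST s. \<exists>A. \<forall>g \<in> C. \<exists>adv. advice_size g adv \<le> s \<and> task A g adv T)"

end

theory Submission
  imports Defs "HOL-Combinatorics.Multiset_Permutations" "HOL-Library.FuncSet"
begin


fun unnat :: "sexp \<Rightarrow> nat" where "unnat (SNat k) = k" | "unnat _ = 0"
fun unlist :: "sexp \<Rightarrow> sexp list" where "unlist (SList xs) = xs" | "unlist _ = []"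
definition encK :: "nat list list \<Rightarrow> sexp" where
  "encK ks = SList (map (\<lambda>r. SList (map SNat r)) ks)"
definition decK :: "sexp \<Rightarrow> nat list list" where
  "decK s = map (\<lambda>x. map unnat (unlist x)) (unlist s)"
lemma decK_encK[simp]: "decK (encK ks) = ks"
  by (simp add: decK_def encK_def o_def)

definition XX :: "nat \<Rightarrow> nat list set" where
  "XX n = {xs. xs \<noteq> [] \<and> length xs \<le> n \<and> set xs \<subseteq> {..<n}}"
definition kk :: "nat \<Rightarrow> nat" where "kk n = (LEAST k. n < 2^k)"
definition LL :: "nat \<Rightarrow> nat" where "LL n = (n+1) * kk n"

lemma kk: "n < 2 ^ kk n"
  unfolding kk_def by (rule LeastI[of _ n]) (simp add: less_exp)

lemma kk_le: "n \<ge> 1 \<Longrightarrow> 2 ^ (kk n - 1) \<le> n"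
proof (rule ccontr)
  assume "n \<ge> 1" "\<not> 2 ^ (kk n - 1) \<le> n"
  then have "n < 2 ^ (kk n - 1)" by simp
  then have "kk n \<le> kk n - 1" unfolding kk_def by (rule Least_le)
  moreover have "kk n \<noteq> 0" using kk[of n] \<open>n\<ge>1\<close> by (cases "kk n") auto
  ultimately show False by simp
qed

lemma card_XX: "card (XX n) \<le> 2 ^ LL n"
proof -
  have "XX n \<subseteq> {xs. set xs \<subseteq> {..<n} \<and> length xs \<le> n}" unfolding XX_def by auto
  then have "card (XX n) \<le> card {xs. set xs \<subseteq> {..<n} \<and> length xs \<le> n}"
    by (intro card_mono finite_lists_length_le) auto
  also have "\<dots> = (\<Sum>i\<le>n. n^i)" by (subst card_lists_length_le) auto
  also have "\<dots> \<le> (\<Sum>i\<le>n. (n+1)^n)"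
  proof (intro sum_mono)
    fix i assume "i \<in> {..n}"
    have "n^i \<le> (n+1)^i" by (intro power_mono) auto
    also have "\<dots> \<le> (n+1)^n" using \<open>i \<in> {..n}\<close> by (intro power_increasing) auto
    finally show "n^i \<le> (n+1)^n" .
  qed
  also have "\<dots> = (n+1)^(n+1)" by simp
  also have "\<dots> \<le> (2 ^ kk n) ^ (n+1)" using kk[of n] by (intro power_mono) auto
  also have "\<dots> = 2 ^ LL n" unfolding LL_def by (metis power_mult mult.commute)
  finally show ?thesis .
qed

lemma ex_enc: "\<exists>f. f ` XX n \<subseteq> {bs::bool list. length bs = LL n} \<and> inj_on f (XX n)"
proof (rule card_le_inj)
  show "finite (XX n)" unfolding XX_def
    by (rule finite_subset[OF _ finite_lists_length_le[of "{..<n}" n]]) auto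
  have e: "{bs::bool list. length bs = LL n} = {xs. set xs \<subseteq> UNIV \<and> length xs = LL n}" by auto
  show "finite {bs::bool list. length bs = LL n}" unfolding e by (rule finite_lists_length_eq) auto
  show "card (XX n) \<le> card {bs::bool list. length bs = LL n}"
    unfolding e using card_XX[of n] by (subst card_lists_length_eq) auto
qed

definition enc :: "nat \<Rightarrow> nat list \<Rightarrow> bool list" where
  "enc n = (SOME f. f ` XX n \<subseteq> {bs::bool list. length bs = LL n} \<and> inj_on f (XX n))"

lemma enc: "enc n ` XX n \<subseteq> {bs::bool list. length bs = LL n}" "inj_on (enc n) (XX n)"
  using someI_ex[OF ex_enc[of n]] unfolding enc_def by auto

definition alg :: "nat \<Rightarrow> (sexp \<Rightarrow> 'o) \<Rightarrow> 'o local_alg" where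
  "alg n outf = \<lparr>init = (\<lambda>d bs. encK [inv_into (XX n) (enc n) bs]), send = (\<lambda>s p. s),
     step = (\<lambda>s ms. encK (decK s @ concat (map decK ms))), out = outf\<rparr>"

definition advg :: "pgraph \<Rightarrow> nat \<Rightarrow> bool list" where
  "advg g v = enc (length g) (v # g ! v)"

lemma wfD:
  assumes "wf_pgraph g"
  shows "length g \<ge> 1" "v < length g \<Longrightarrow> distinct (g ! v)"
    "v < length g \<Longrightarrow> u \<in> set (g!v) \<Longrightarrow> u < length g"
    "v < length g \<Longrightarrow> u \<in> set (g!v) \<Longrightarrow> u \<noteq> v"
    "v < length g \<Longrightarrow> u \<in> set (g!v) \<Longrightarrow> v \<in> set (g!u)"
    "u < length g \<Longrightarrow> v < length g \<Longrightarrow> (u, v) \<in> (pg_edges g)\<^sup>*"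
  using assms unfolding wf_pgraph_def by blast+

lemma wf_row: "wf_pgraph g \<Longrightarrow> v < length g \<Longrightarrow> v # g ! v \<in> XX (length g)"
proof -
  assume w: "wf_pgraph g" and v: "v < length g"
  then have d: "distinct (g!v)" and s: "set (g!v) \<subseteq> {..<length g} - {v}"
    using wfD(2,3,4)[OF w v] by auto
  have "length (g!v) = card (set (g!v))" using d by (simp add: distinct_card)
  also have "\<dots> \<le> card ({..<length g} - {v})" using s by (intro card_mono) auto
  also have "\<dots> = length g - 1" using v by simp
  finally show ?thesis using v s unfolding XX_def by auto
qed


lemma run0: "wf_pgraph g \<Longrightarrow> v < length g \<Longrightarrow> decK (run (alg (length g) outf) g (advg g) 0 v) = [v # g!v]"
  by (simp add: alg_def advg_def inv_into_f_f[OF enc(2) wf_row])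

lemma runS: "decK (run (alg n outf) g adv (Suc t) v) =
   decK (run (alg n outf) g adv t v) @ concat (map (\<lambda>u. decK (run (alg n outf) g adv t u)) (g!v))"
  by (simp add: alg_def o_def)

definition Inv :: "pgraph \<Rightarrow> nat list list \<Rightarrow> nat \<Rightarrow> nat \<Rightarrow> bool" where
  "Inv g K t v \<longleftrightarrow> K \<noteq> [] \<and> hd K = v # g!v \<and> (\<forall>r\<in>set K. \<exists>u<length g. r = u # g!u) \<and>
    (\<forall>k\<le>t. \<forall>x. (v,x) \<in> (pg_edges g)^^k \<longrightarrow> x # g!x \<in> set K)"

lemma Inv0: "v < length g \<Longrightarrow> Inv g [v # g!v] 0 v"
  unfolding Inv_def by auto

lemma InvD:
  assumes "Inv g K t v"
  shows "K \<noteq> []" "hd K = v # g!v" "r \<in> set K \<Longrightarrow> \<exists>u<length g. r = u # g!u"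
    "k \<le> t \<Longrightarrow> (v,x) \<in> (pg_edges g)^^k \<Longrightarrow> x # g!x \<in> set K"
  using assms unfolding Inv_def by blast+

lemma InvS:
  assumes w: "wf_pgraph g" and v: "v < length g" and IH: "\<And>u. u < length g \<Longrightarrow> Inv g (K u) t u"
  shows "Inv g (K v @ concat (map K (g!v))) (Suc t) v"
proof -
  have nb: "\<And>u. u \<in> set (g!v) \<Longrightarrow> u < length g" using wfD(3)[OF w v] by blast
  have I: "Inv g (K v) t v" by (rule IH[OF v])
  have A1: "K v @ concat (map K (g ! v)) \<noteq> []" using InvD(1)[OF I] by simp
  have A2: "hd (K v @ concat (map K (g ! v))) = v # g ! v" using InvD(1,2)[OF I] by simp
  have A3: "\<exists>u<length g. r = u # g ! u" if r: "r \<in> set (K v @ concat (map K (g ! v)))" for r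
  proof -
    from r consider "r \<in> set (K v)" | u where "u \<in> set (g!v)" "r \<in> set (K u)" by auto
    then show ?thesis
    proof cases
      case 1 then show ?thesis by (rule InvD(3)[OF I])
    next
      case 2 then show ?thesis using InvD(3)[OF IH[OF nb[OF 2(1)]]] by blast
    qed
  qed
  have A4: "x # g ! x \<in> set (K v @ concat (map K (g ! v)))"
    if k: "k \<le> Suc t" and p: "(v, x) \<in> pg_edges g ^^ k" for k x
  proof (cases k)
    case 0 then have "x = v" using p by simp
    moreover have "hd (K v) \<in> set (K v)" using InvD(1)[OF I] by (rule hd_in_set)
    ultimately show ?thesis using InvD(2)[OF I] by simp
  next
    case (Suc j)
    from p[unfolded Suc] obtain u where u: "(v,u) \<in> pg_edges g" "(u,x) \<in> pg_edges g ^^ j"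
      by (rule relpow_Suc_E2)
    have uv: "u \<in> set (g!v)" using u(1) unfolding pg_edges_def by auto
    have "j \<le> t" using k Suc by simp
    then have "x # g!x \<in> set (K u)" by (rule InvD(4)[OF IH[OF nb[OF uv]] _ u(2)])
    then show ?thesis using uv by auto
  qed
  show ?thesis unfolding Inv_def using A1 A2 A3 A4 by blast
qed

lemma run_inv:
  assumes w: "wf_pgraph g"
  shows "v < length g \<Longrightarrow> Inv g (decK (run (alg (length g) outf) g (advg g) t v)) t v"
proof (induction t arbitrary: v)
  case 0
  have e: "decK (run (alg (length g) outf) g (advg g) 0 v) = [v # g!v]" by (rule run0[OF w 0])
  show ?case unfolding e by (rule Inv0[OF 0])
next
  case (Suc t) then show ?case unfolding runS by (intro InvS[OF w]) auto
qed

definition outH :: "nat \<Rightarrow> nat list list \<Rightarrow> pgraph" where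
  "outH n K = map (\<lambda>i. tl (the (find (\<lambda>r. r \<noteq> [] \<and> hd r = i) K))) [0..<n]"

lemma outH_eq:
  assumes all: "\<forall>r\<in>set K. \<exists>u<length g. r = u # g!u" and full: "\<forall>i<length g. i # g!i \<in> set K"
  shows "outH (length g) K = g"
proof (rule nth_equalityI)
  show "length (outH (length g) K) = length g" by (simp add: outH_def)
  fix i assume i: "i < length (outH (length g) K)"
  then have i': "i < length g" by (simp add: outH_def)
  let ?P = "\<lambda>r. r \<noteq> [] \<and> hd r = i"
  have "find ?P K \<noteq> None" using full i' by (auto simp: find_None_iff)
  then obtain r where r: "find ?P K = Some r" by auto
  then have "r \<in> set K" "?P r" by (auto simp: find_Some_iff nth_mem)
  then obtain u where "u < length g" "r = u # g!u" using all by blast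
  with \<open>?P r\<close> have "r = i # g!i" by simp
  then show "outH (length g) K ! i = g ! i" using r i' by (simp add: outH_def)
qed

lemma dist_le:
  assumes w: "wf_pgraph g" and u: "u < length g" and v: "v < length g"
  shows "(u,v) \<in> (pg_edges g)^^(pg_dist g u v)" "pg_dist g u v \<le> diameter g"
proof -
  obtain k where "(u,v) \<in> (pg_edges g)^^k" using wfD(6)[OF w u v] rtrancl_power by blast
  then show "(u,v) \<in> (pg_edges g)^^(pg_dist g u v)" unfolding pg_dist_def by (rule LeastI)
  have fin: "finite {pg_dist g u v | u v. u < length g \<and> v < length g}"
  proof -
    have "{pg_dist g u v | u v. u < length g \<and> v < length g} = (\<lambda>(u,v). pg_dist g u v) ` ({..<length g} \<times> {..<length g})"
      by auto
    then show ?thesis by simp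
  qed
  show "pg_dist g u v \<le> diameter g" unfolding diameter_def
    by (rule Max_ge[OF fin]) (use u v in blast)
qed

lemma final_state:
  assumes w: "wf_pgraph g" and v: "v < length g"
  shows "outH (length g) (decK (run (alg (length g) outf) g (advg g) (diameter g) v)) = g"
    "hd (decK (run (alg (length g) outf) g (advg g) (diameter g) v)) = v # g!v"
proof -
  have I: "Inv g (decK (run (alg (length g) outf) g (advg g) (diameter g) v)) (diameter g) v"
    by (rule run_inv[OF w v])
  show "outH (length g) (decK (run (alg (length g) outf) g (advg g) (diameter g) v)) = g"
  proof (rule outH_eq)
    show "\<forall>r\<in>set (decK (run (alg (length g) outf) g (advg g) (diameter g) v)). \<exists>u<length g. r = u # g ! u"
      using InvD(3)[OF I] by blast
    show "\<forall>i<length g. i # g ! i \<in> set (decK (run (alg (length g) outf) g (advg g) (diameter g) v))"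
      using InvD(4)[OF I dist_le(2)[OF w v] dist_le(1)[OF w v]] by blast
  qed
  show "hd (decK (run (alg (length g) outf) g (advg g) (diameter g) v)) = v # g!v"
    by (rule InvD(2)[OF I])
qed

lemma adv_size: "wf_pgraph g \<Longrightarrow> advice_size g (advg g) = LL (length g)"
proof -
  assume w: "wf_pgraph g"
  have "(\<lambda>v. length (advg g v)) ` {0..<length g} = {LL (length g)}"
  proof -
    have "\<And>v. v < length g \<Longrightarrow> length (advg g v) = LL (length g)"
      using enc(1) wf_row[OF w] unfolding advg_def by blast
    moreover have "0 \<in> {0..<length g}" using wfD(1)[OF w] by auto
    ultimately show ?thesis by (auto intro!: image_eqI[of _ _ 0])
  qed
  then show ?thesis by (simp add: advice_size_def)
qed

definition outL :: "nat \<Rightarrow> sexp \<Rightarrow> pgraph \<times> nat" where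
  "outL n s = (outH n (decK s), hd (hd (decK s)))"
definition outA :: "nat \<Rightarrow> sexp \<Rightarrow> pgraph" where
  "outA n s = outH n (decK s)"

lemma upper_labeled:
  assumes "n \<ge> 1"
  shows "min_advice labeled_TR D (graph_class n D) \<le> LL n"
  unfolding min_advice_def
proof (rule Least_le, rule exI[of _ "alg n (outL n)"], intro ballI)
  fix g assume "g \<in> graph_class n D"
  then have w: "wf_pgraph g" and n: "length g = n" and d: "diameter g = D"
    unfolding graph_class_def by auto
  show "\<exists>adv. advice_size g adv \<le> LL n \<and> labeled_TR (alg n (outL n)) g adv D"
  proof (intro exI conjI)
    show "advice_size g (advg g) \<le> LL n" using adv_size[OF w] n by simp
    show "labeled_TR (alg n (outL n)) g (advg g) D" unfolding labeled_TR_def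
    proof (intro exI conjI allI impI)
      show "pg_iso_map id g g" unfolding pg_iso_map_def by simp
      fix v assume v: "v < length g"
      have "out (alg n (outL n)) s = outL n s" for s by (simp add: alg_def)
      then show "out (alg n (outL n)) (run (alg n (outL n)) g (advg g) D v) = (g, id v)"
        using final_state[OF w v, of "outL n"] unfolding n d outL_def by simp
    qed
  qed
qed

lemma upper_anon:
  assumes "n \<ge> 1"
  shows "\<forall>g \<in> graph_class n D. \<exists>adv. advice_size g adv \<le> LL n \<and> anon_TR (alg n (outA n)) g adv D"
proof (intro ballI)
  fix g assume "g \<in> graph_class n D"
  then have w: "wf_pgraph g" and n: "length g = n" and d: "diameter g = D"
    unfolding graph_class_def by auto
  show "\<exists>adv. advice_size g adv \<le> LL n \<and> anon_TR (alg n (outA n)) g adv D"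
  proof (intro exI conjI)
    show "advice_size g (advg g) \<le> LL n" using adv_size[OF w] n by simp
    show "anon_TR (alg n (outA n)) g (advg g) D" unfolding anon_TR_def
    proof (intro allI impI)
      fix v assume v: "v < length g"
      have "out (alg n (outA n)) s = outA n s" for s by (simp add: alg_def)
      then have "out (alg n (outA n)) (run (alg n (outA n)) g (advg g) D v) = g"
        using final_state[OF w v, of "outA n"] unfolding n d outA_def by simp
      moreover have "pg_isomorphic g g" unfolding pg_isomorphic_def pg_iso_map_def
        by (rule exI[of _ id]) simp
      ultimately show "pg_isomorphic g (out (alg n (outA n)) (run (alg n (outA n)) g (advg g) D v))"
        by simp
    qed
  qed
qed



definition adj :: "nat \<Rightarrow> nat \<Rightarrow> nat \<Rightarrow> nat \<Rightarrow> bool" where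
  "adj n D u x \<longleftrightarrow> (u < D \<and> x < D \<and> (x = Suc u \<or> u = Suc x)) \<or> (u = D - 1 \<and> D \<le> x \<and> x < n) \<or>
     (x = D - 1 \<and> D \<le> u \<and> u < n) \<or> (D \<le> u \<and> u < n \<and> D \<le> x \<and> x < n \<and> u \<noteq> x)"

definition EE :: "nat \<Rightarrow> nat \<Rightarrow> (nat \<times> nat) set" where
  "EE n D = {(u,x). u < n \<and> adj n D u x}"

definition phi :: "nat \<Rightarrow> nat \<Rightarrow> nat" where "phi D i = min i D"

locale fam =
  fixes n D :: nat
  assumes D1: "1 \<le> D" and Dn: "D < n"
begin

definition row :: "nat list list \<Rightarrow> nat \<Rightarrow> nat list" where
  "row \<sigma> i = (if i < D then (if i = 0 then [] else [i-1]) @ (if Suc i < D then [Suc i] else [D..<n])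
     else (D-1) # \<sigma>!(i-D))"

definition G :: "nat list list \<Rightarrow> pgraph" where "G \<sigma> = map (row \<sigma>) [0..<n]"

definition P :: "nat \<Rightarrow> nat list set" where "P j = permutations_of_set ({D..<n} - {D+j})"

definition Sig :: "nat list list set" where
  "Sig = {\<sigma>. length \<sigma> = n - D \<and> (\<forall>j<n-D. \<sigma>!j \<in> P j)}"

lemma G_len[simp]: "length (G \<sigma>) = n" by (simp add: G_def)
lemma G_nth: "i < n \<Longrightarrow> G \<sigma> ! i = row \<sigma> i" by (simp add: G_def)

lemma Sig_row: "\<sigma> \<in> Sig \<Longrightarrow> D \<le> i \<Longrightarrow> i < n \<Longrightarrow> set (\<sigma>!(i-D)) = {D..<n} - {i} \<and> distinct (\<sigma>!(i-D))"
  unfolding Sig_def P_def permutations_of_set_def by auto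

lemma row_low: "u < D \<Longrightarrow> set (row \<sigma> u) = {x. (0<u \<and> x = u-1) \<or> (Suc u < D \<and> x = Suc u) \<or> (Suc u = D \<and> D \<le> x \<and> x < n)}"
  unfolding row_def by (cases "u = 0"; cases "Suc u < D") auto

lemma adj_low: "u < D \<Longrightarrow> adj n D u x \<longleftrightarrow> ((0<u \<and> x = u-1) \<or> (Suc u < D \<and> x = Suc u) \<or> (Suc u = D \<and> D \<le> x \<and> x < n))"
  unfolding adj_def using D1 Dn by arith

lemma adj_high: "D \<le> u \<Longrightarrow> u < n \<Longrightarrow> adj n D u x \<longleftrightarrow> (x = D - 1 \<or> (D \<le> x \<and> x < n \<and> u \<noteq> x))"
  unfolding adj_def using D1 Dn by arith

lemma row_set: assumes "\<sigma> \<in> Sig" "u < n" shows "x \<in> set (row \<sigma> u) \<longleftrightarrow> adj n D u x"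
proof (cases "u < D")
  case True then show ?thesis by (simp add: row_low adj_low)
next
  case False
  then have r: "set (row \<sigma> u) = insert (D-1) ({D..<n} - {u})"
    using Sig_row[OF assms(1) _ assms(2)] unfolding row_def by simp
  show ?thesis unfolding r using adj_high[of u x] False assms(2) by auto
qed

lemma row_distinct: assumes "\<sigma> \<in> Sig" "u < n" shows "distinct (row \<sigma> u)"
proof (cases "u < D")
  case True
  show ?thesis
  proof (cases "Suc u < D")
    case True then show ?thesis using \<open>u < D\<close> unfolding row_def by (simp, arith)
  next
    case False then show ?thesis using \<open>u < D\<close> unfolding row_def by auto
  qed
next
  case False
  have Du: "D \<le> u" using False by simp
  have SR: "set (\<sigma>!(u-D)) = {D..<n} - {u}" "distinct (\<sigma>!(u-D))" using Sig_row[OF assms(1) Du assms(2)] by auto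
  have "D - 1 < D" using D1 by simp
  then have "D - 1 \<notin> set (\<sigma>!(u-D))" unfolding SR(1) by simp
  moreover have "row \<sigma> u = (D-1) # \<sigma>!(u-D)" using False unfolding row_def by simp
  ultimately show ?thesis using SR(2) by simp
qed

lemma adj_sym: "adj n D u x \<Longrightarrow> adj n D x u" unfolding adj_def using D1 Dn by auto
lemma adj_lt: "adj n D u x \<Longrightarrow> x < n" unfolding adj_def using D1 Dn by auto
lemma adj_irr: "adj n D u x \<Longrightarrow> u \<noteq> x" unfolding adj_def using D1 Dn by auto

lemma edges: "\<sigma> \<in> Sig \<Longrightarrow> pg_edges (G \<sigma>) = EE n D"
  unfolding pg_edges_def EE_def using row_set by (auto simp: G_nth)

lemma chain: "i + k < D \<Longrightarrow> (i, i+k) \<in> EE n D ^^ k \<and> (i+k, i) \<in> EE n D ^^ k"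
proof (induction k)
  case 0 then show ?case by simp
next
  case (Suc k)
  have l: "i + k < D" "i + Suc k < D" "i + k < n" "i + Suc k < n" using Suc.prems Dn by linarith+
  have e1: "(i+k, i + Suc k) \<in> EE n D" using l unfolding EE_def adj_def by simp
  have e2: "(i + Suc k, i+k) \<in> EE n D" using l unfolding EE_def adj_def by simp
  have "(i, i+k) \<in> EE n D ^^ k" "(i+k, i) \<in> EE n D ^^ k" using Suc by auto
  then show ?case using e1 e2 relpow_Suc_I relpow_Suc_I2 by metis
qed

lemma reach: assumes "u < n" "v < n" shows "\<exists>k\<le>D. (u,v) \<in> EE n D ^^ k"
proof -
  have dS: "(D-1, x) \<in> EE n D \<and> (x, D-1) \<in> EE n D" if x: "D \<le> x" "x < n" for x
  proof -
    have "D - 1 < n" using Dn by linarith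
    then show ?thesis using x unfolding EE_def adj_def by blast
  qed
  show ?thesis
  proof (cases "u < D")
    case u: True
    show ?thesis
    proof (cases "v < D")
      case v: True
      show ?thesis
      proof (cases "u \<le> v")
        case True
        with chain[of u "v-u"] v have "(u,v) \<in> EE n D ^^ (v-u)" by auto
        then show ?thesis using v by (intro exI[of _ "v-u"]) auto
      next
        case False
        with chain[of v "u-v"] u have "(u,v) \<in> EE n D ^^ (u-v)" by auto
        then show ?thesis using u by (intro exI[of _ "u-v"]) auto
      qed
    next
      case v: False
      have c: "(u, D-1) \<in> EE n D ^^ (D-1-u)" using chain[of u "D-1-u"] u by auto
      have "(u,v) \<in> EE n D ^^ Suc (D-1-u)" using relpow_Suc_I[OF c] dS[of v] v assms by auto
      then show ?thesis using u by (intro exI[of _ "Suc (D-1-u)"]) auto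
    qed
  next
    case u: False
    show ?thesis
    proof (cases "v < D")
      case v: True
      have c: "(D-1, v) \<in> EE n D ^^ (D-1-v)" using chain[of v "D-1-v"] v by auto
      have "(u,v) \<in> EE n D ^^ Suc (D-1-v)" using relpow_Suc_I2[OF _ c] dS[of u] u assms by auto
      then show ?thesis using v by (intro exI[of _ "Suc (D-1-v)"]) auto
    next
      case v: False
      show ?thesis
      proof (cases "u = v")
        case True then show ?thesis by (intro exI[of _ 0]) auto
      next
        case False
        then have "(u,v) \<in> EE n D" using u v assms unfolding EE_def adj_def by simp
        then show ?thesis using D1 by (intro exI[of _ 1]) auto
      qed
    qed
  qed
qed

lemma phi_edge: "(u,x) \<in> EE n D \<Longrightarrow> phi D x \<le> phi D u + 1"
  unfolding EE_def adj_def phi_def using D1 by auto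

lemma phi_pow: "(u,x) \<in> EE n D ^^ k \<Longrightarrow> phi D x \<le> phi D u + k"
proof (induction k arbitrary: x)
  case 0 then show ?case by simp
next
  case (Suc k)
  then obtain y where "(u,y) \<in> EE n D ^^ k" "(y,x) \<in> EE n D" by (meson relpow_Suc_E)
  then show ?case using Suc.IH phi_edge by fastforce
qed

lemma G_wf: assumes "\<sigma> \<in> Sig" shows "G \<sigma> \<in> graph_class n D"
proof -
  have w: "wf_pgraph (G \<sigma>)" unfolding wf_pgraph_def
  proof (intro conjI allI impI ballI)
    show "1 \<le> length (G \<sigma>)" using Dn by simp
    fix v assume v: "v < length (G \<sigma>)"
    then show "distinct (G \<sigma> ! v)" using row_distinct[OF assms] by (simp add: G_nth)
    fix u assume u: "u \<in> set (G \<sigma> ! v)"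
    then have a: "adj n D v u" using row_set[OF assms] v by (simp add: G_nth)
    show "u < length (G \<sigma>)" using adj_lt[OF a] by simp
    show "u \<noteq> v" using adj_irr[OF a] by simp
    show "v \<in> set (G \<sigma> ! u)" using adj_sym[OF a] adj_lt[OF a] row_set[OF assms] by (simp add: G_nth)
  next
    fix u v assume "u < length (G \<sigma>)" "v < length (G \<sigma>)"
    then obtain k where "(u,v) \<in> EE n D ^^ k" using reach by auto
    then show "(u, v) \<in> (pg_edges (G \<sigma>))\<^sup>*" unfolding edges[OF assms] using rtrancl_power by blast
  qed
  have dle: "pg_dist (G \<sigma>) u v \<le> D" if uv: "u < n" "v < n" for u v
  proof -
    obtain k where k: "k \<le> D" "(u,v) \<in> EE n D ^^ k" using reach[OF uv] by blast
    have "pg_dist (G \<sigma>) u v \<le> k" unfolding pg_dist_def edges[OF assms] by (rule Least_le) (rule k(2))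
    then show ?thesis using k by simp
  qed
  have d0: "pg_dist (G \<sigma>) 0 D = D"
    unfolding pg_dist_def edges[OF assms]
  proof (rule Least_equality)
    obtain k where k: "k \<le> D" "(0,D) \<in> EE n D ^^ k" using reach[of 0 D] Dn by auto
    have "phi D D \<le> phi D 0 + k" by (rule phi_pow[OF k(2)])
    then have "k = D" using k(1) by (simp add: phi_def)
    then show "(0, D) \<in> EE n D ^^ D" using k by simp
  next
    fix y assume "(0, D) \<in> EE n D ^^ y"
    from phi_pow[OF this] show "D \<le> y" by (simp add: phi_def)
  qed
  have fin: "finite {pg_dist (G \<sigma>) u v | u v. u < length (G \<sigma>) \<and> v < length (G \<sigma>)}"
  proof -
    have "{pg_dist (G \<sigma>) u v | u v. u < length (G \<sigma>) \<and> v < length (G \<sigma>)} =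
      (\<lambda>(u,v). pg_dist (G \<sigma>) u v) ` ({..<n} \<times> {..<n})" by auto
    then show ?thesis by simp
  qed
  have "diameter (G \<sigma>) = D" unfolding diameter_def
  proof (rule Max_eqI[OF fin])
    fix y assume "y \<in> {pg_dist (G \<sigma>) u v | u v. u < length (G \<sigma>) \<and> v < length (G \<sigma>)}"
    then show "y \<le> D" using dle by auto
  next
    show "D \<in> {pg_dist (G \<sigma>) u v | u v. u < length (G \<sigma>) \<and> v < length (G \<sigma>)}"
      by (rule CollectI, rule exI[of _ 0], rule exI[of _ D]) (use Dn in \<open>simp add: d0\<close>)
  qed
  then show ?thesis using w unfolding graph_class_def by simp
qed

end


lemma port_eq: "g ! u = g' ! u \<Longrightarrow> port g u v = port g' u v"
  unfolding port_def by simp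

lemma port0: "g ! u = v # r \<Longrightarrow> distinct (g ! u) \<Longrightarrow> port g u v = 0"
  unfolding port_def
proof (rule the_equality)
  assume "g ! u = v # r" "distinct (g ! u)"
  then show "0 < length (g ! u) \<and> g ! u ! 0 = v" by simp
  fix q assume q: "q < length (g ! u) \<and> g ! u ! q = v"
  have "g ! u ! q = g ! u ! 0" using q \<open>g ! u = v # r\<close> by simp
  moreover have "(g ! u ! q = g ! u ! 0) = (q = 0)"
    by (rule nth_eq_iff_index_eq[OF \<open>distinct (g ! u)\<close>]) (use q \<open>g ! u = v # r\<close> in auto)
  ultimately show "q = 0" by simp
qed

lemma run_adv_local:
  assumes rng: "\<forall>v<length g. set (g!v) \<subseteq> {..<length g}" and ag: "\<forall>v<length g. adv v = adv' v"
  shows "v < length g \<Longrightarrow> run A g adv t v = run A g adv' t v"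
proof (induction t arbitrary: v)
  case 0 then show ?case using ag by simp
next
  case (Suc t)
  have "\<And>u. u \<in> set (g!v) \<Longrightarrow> run A g adv t u = run A g adv' t u"
    using Suc.IH rng Suc.prems by blast
  then show ?case using Suc.IH[OF Suc.prems] by (simp cong: map_cong)
qed

context fam begin

lemma G_rng: "\<sigma> \<in> Sig \<Longrightarrow> \<forall>v<length (G \<sigma>). set (G \<sigma>!v) \<subseteq> {..<length (G \<sigma>)}"
proof (intro allI impI subsetI)
  fix v x assume s: "\<sigma> \<in> Sig" and v: "v < length (G \<sigma>)" and x: "x \<in> set (G \<sigma> ! v)"
  have vn: "v < n" using v by simp
  have "adj n D v x" using x row_set[OF s vn] by (simp add: G_nth[OF vn])
  then show "x \<in> {..<length (G \<sigma>)}" using adj_lt by simp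
qed

lemma len_eq: assumes "\<sigma> \<in> Sig" "\<sigma>' \<in> Sig" "v < n" shows "length (G \<sigma> ! v) = length (G \<sigma>' ! v)"
proof -
  have "set (G \<sigma> ! v) = set (G \<sigma>' ! v)" using row_set[OF assms(1) assms(3)] row_set[OF assms(2) assms(3)]
    by (auto simp: G_nth[OF assms(3)])
  then show ?thesis using row_distinct[OF assms(1) assms(3)] row_distinct[OF assms(2) assms(3)]
    by (metis G_nth[OF assms(3)] distinct_card)
qed

lemma row_lowD: "v < D \<Longrightarrow> row \<sigma> v = row \<sigma>' v" unfolding row_def by simp

lemma port_S: assumes "\<sigma> \<in> Sig" "D \<le> u" "u < n" shows "port (G \<sigma>) u (D-1) = 0"
proof (rule port0)
  show "G \<sigma> ! u = (D-1) # \<sigma>!(u-D)" using assms by (simp add: G_nth row_def)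
  show "distinct (G \<sigma> ! u)" using row_distinct[OF assms(1) assms(3)] by (simp add: G_nth[OF assms(3)])
qed

lemma local_run:
  assumes s: "\<sigma> \<in> Sig" and s': "\<sigma>' \<in> Sig"
  shows "v < n \<Longrightarrow> phi D v + t \<le> D \<Longrightarrow> run A (G \<sigma>) adv t v = run A (G \<sigma>') adv t v"
proof (induction t arbitrary: v)
  case 0 then show ?case using len_eq[OF s s' 0(1)] by simp
next
  case (Suc t)
  have vD: "v < D" using Suc.prems by (simp add: phi_def)
  have rv: "G \<sigma> ! v = G \<sigma>' ! v" using vD Suc.prems(1) row_lowD[OF vD] by (simp add: G_nth)
  have m: "send A (run A (G \<sigma>) adv t u) (port (G \<sigma>) u v) = send A (run A (G \<sigma>') adv t u) (port (G \<sigma>') u v)"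
    if u: "u \<in> set (G \<sigma> ! v)" for u
  proof -
    have a: "adj n D v u" using u row_set[OF s Suc.prems(1)] by (simp add: G_nth[OF Suc.prems(1)])
    have un: "u < n" by (rule adj_lt[OF a])
    have "(v,u) \<in> EE n D" using a Suc.prems(1) by (simp add: EE_def)
    then have "phi D u \<le> phi D v + 1" by (rule phi_edge)
    then have "run A (G \<sigma>) adv t u = run A (G \<sigma>') adv t u" using Suc.IH[OF un] Suc.prems(2) by simp
    moreover have "port (G \<sigma>) u v = port (G \<sigma>') u v"
    proof (cases "u < D")
      case True then show ?thesis using row_lowD[OF True] un by (intro port_eq) (simp add: G_nth)
    next
      case False
      then have "Suc v = D" using a vD unfolding adj_low[OF vD] by auto
      then have "v = D - 1" by simp
      then show ?thesis using port_S[OF s _ un] port_S[OF s' _ un] False by simp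
    qed
    ultimately show ?thesis by simp
  qed
  have "map (\<lambda>u. send A (run A (G \<sigma>) adv t u) (port (G \<sigma>) u v)) (G \<sigma> ! v) =
        map (\<lambda>u. send A (run A (G \<sigma>') adv t u) (port (G \<sigma>') u v)) (G \<sigma>' ! v)"
    unfolding rv[symmetric] using m by (intro map_cong) auto
  moreover have "run A (G \<sigma>) adv t v = run A (G \<sigma>') adv t v" using Suc.IH[OF Suc.prems(1)] Suc.prems(2) by simp
  ultimately show ?case by simp
qed

lemma G_inj: assumes "\<sigma> \<in> Sig" "\<sigma>' \<in> Sig" "G \<sigma> = G \<sigma>'" shows "\<sigma> = \<sigma>'"
proof (rule nth_equalityI)
  show "length \<sigma> = length \<sigma>'" using assms by (simp add: Sig_def)
  fix j assume j: "j < length \<sigma>"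
  then have jj: "D + j < n" using assms(1) by (simp add: Sig_def)
  have "G \<sigma> ! (D+j) = G \<sigma>' ! (D+j)" using assms(3) by simp
  then show "\<sigma> ! j = \<sigma>' ! j" using jj by (simp add: G_nth row_def)
qed

lemma card_Sig: "card Sig = fact (n - D - 1) ^ (n - D)"
proof -
  let ?m = "n - D"
  have img: "Sig = (\<lambda>f. map f [0..<?m]) ` (PiE {..<?m} P)"
  proof
    show "(\<lambda>f. map f [0..<?m]) ` (PiE {..<?m} P) \<subseteq> Sig"
    proof
      fix \<sigma> assume "\<sigma> \<in> (\<lambda>f. map f [0..<?m]) ` (PiE {..<?m} P)"
      then obtain f where f: "f \<in> PiE {..<?m} P" and e: "\<sigma> = map f [0..<?m]" by blast
      have "\<forall>j<?m. \<sigma>!j \<in> P j" using PiE_mem[OF f] e by simp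
      then show "\<sigma> \<in> Sig" unfolding Sig_def using e by simp
    qed
    show "Sig \<subseteq> (\<lambda>f. map f [0..<?m]) ` (PiE {..<?m} P)"
    proof
      fix \<sigma> assume s: "\<sigma> \<in> Sig"
      have "\<sigma> = map (restrict (\<lambda>j. \<sigma>!j) {..<?m}) [0..<?m]" using s
        by (intro nth_equalityI) (auto simp: Sig_def)
      moreover have "restrict (\<lambda>j. \<sigma>!j) {..<?m} \<in> PiE {..<?m} P" using s by (auto simp: Sig_def)
      ultimately show "\<sigma> \<in> (\<lambda>f. map f [0..<?m]) ` (PiE {..<?m} P)" by blast
    qed
  qed
  have inj: "inj_on (\<lambda>f. map f [0..<?m]) (PiE {..<?m} P)"
  proof
    fix f f' assume f: "f \<in> PiE {..<?m} P" and f': "f' \<in> PiE {..<?m} P"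
      and e: "map f [0..<?m] = map f' [0..<?m]"
    show "f = f'"
    proof (rule PiE_ext[OF f f'])
      fix i assume "i \<in> {..<?m}"
      then show "f i = f' i" using e by (metis atLeastLessThan_iff lessThan_iff map_eq_conv set_upt zero_le)
    qed
  qed
  have cP: "card (P j) = fact (?m - 1)" if "j < ?m" for j
  proof -
    have "card ({D..<n} - {D+j}) = ?m - 1" using that by simp
    then show ?thesis unfolding P_def by simp
  qed
  have "card Sig = card (PiE {..<?m} P)" unfolding img by (rule card_image[OF inj])
  also have "\<dots> = (\<Prod>j\<in>{..<?m}. card (P j))" by (rule card_PiE) simp
  also have "\<dots> = (\<Prod>j\<in>{..<?m}. fact (?m - 1))" by (rule prod.cong) (auto simp: cP)
  finally show ?thesis by simp
qed

lemma Sig_ne: "Sig \<noteq> {}"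
proof -
  have "card Sig \<noteq> 0" unfolding card_Sig by simp
  then show ?thesis by auto
qed

end


lemma iso_rec:
  assumes iso: "pg_iso_map f g H" and rng: "\<forall>v<length g. set (g!v) \<subseteq> {..<length g}"
  shows "map (\<lambda>v. map (\<lambda>x. THE y. y < length g \<and> (map f [0..<length g])!y = x) (H ! ((map f [0..<length g])!v))) [0..<length g] = g"
proof (rule nth_equalityI)
  show "length (map (\<lambda>v. map (\<lambda>x. THE y. y < length g \<and> (map f [0..<length g])!y = x) (H ! ((map f [0..<length g])!v))) [0..<length g]) = length g"
    by simp
  fix v assume "v < length (map (\<lambda>v. map (\<lambda>x. THE y. y < length g \<and> (map f [0..<length g])!y = x) (H ! ((map f [0..<length g])!v))) [0..<length g])"
  then have v: "v < length g" by simp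
  have inj: "inj_on f {0..<length g}" using iso unfolding pg_iso_map_def by (blast dest: bij_betw_imp_inj_on)
  have Hv: "H ! (f v) = map f (g ! v)" using iso v unfolding pg_iso_map_def by blast
  have th: "(THE y. y < length g \<and> (map f [0..<length g])!y = f x) = x" if x: "x \<in> set (g!v)" for x
  proof (rule the_equality)
    have xl: "x < length g" using rng v x by blast
    then show "x < length g \<and> map f [0..<length g] ! x = f x" by simp
    fix y assume y: "y < length g \<and> map f [0..<length g] ! y = f x"
    then have "f y = f x" using y by auto
    then show "y = x" using inj y xl by (auto dest: inj_onD)
  qed
  have "map (\<lambda>x. THE y. y < length g \<and> (map f [0..<length g])!y = x) (map f (g ! v)) = g ! v"
    using th by (induction "g!v") (auto intro: map_idI)
  then show "map (\<lambda>v. map (\<lambda>x. THE y. y < length g \<and> (map f [0..<length g])!y = x) (H ! ((map f [0..<length g])!v))) [0..<length g] ! v = g ! v"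
    using v Hv by simp
qed

lemma sum_pow2_lt: "(\<Sum>i\<le>s. (2::nat)^i) < 2^(s+1)"
  by (induction s) auto

context fam begin

theorem lower_count:
  assumes hyp: "\<forall>g\<in>graph_class n D. \<exists>adv. advice_size g adv \<le> s \<and> anon_TR A g adv D"
  shows "fact (n - D - 1) ^ (n - D) \<le> (2^(s+1))^n * n^n"
proof -
  obtain \<sigma>0 where s0: "\<sigma>0 \<in> Sig" using Sig_ne by blast
  define adv\<sigma> where "adv\<sigma> \<sigma> = (SOME adv. advice_size (G \<sigma>) adv \<le> s \<and> anon_TR A (G \<sigma>) adv D)" for \<sigma>
  have AD: "advice_size (G \<sigma>) (adv\<sigma> \<sigma>) \<le> s \<and> anon_TR A (G \<sigma>) (adv\<sigma> \<sigma>) D" if "\<sigma> \<in> Sig" for \<sigma>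
  proof -
    have ex: "\<exists>adv. advice_size (G \<sigma>) adv \<le> s \<and> anon_TR A (G \<sigma>) adv D" using hyp G_wf[OF that] by blast
    show ?thesis unfolding adv\<sigma>_def by (rule someI_ex[OF ex])
  qed
  define a where "a \<sigma> = map (adv\<sigma> \<sigma>) [0..<n]" for \<sigma>
  define \<Phi> where "\<Phi> L = out A (run A (G \<sigma>0) (\<lambda>i. L!i) D 0)" for L
  have n0: "0 < n" using Dn by simp
  have Phi_eq: "\<Phi> (a \<sigma>) = out A (run A (G \<sigma>) (adv\<sigma> \<sigma>) D 0)" if s: "\<sigma> \<in> Sig" for \<sigma>
  proof -
    have "run A (G \<sigma>0) (\<lambda>i. a \<sigma> ! i) D 0 = run A (G \<sigma>) (\<lambda>i. a \<sigma> ! i) D 0"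
      by (rule local_run[OF s0 s n0]) (simp add: phi_def)
    also have "\<dots> = run A (G \<sigma>) (adv\<sigma> \<sigma>) D 0"
      by (rule run_adv_local[OF G_rng[OF s]]) (use n0 in \<open>auto simp: a_def\<close>)
    finally show ?thesis unfolding \<Phi>_def by simp
  qed
  have iso: "pg_isomorphic (G \<sigma>) (\<Phi> (a \<sigma>))" if s: "\<sigma> \<in> Sig" for \<sigma>
    using AD[OF s] n0 unfolding anon_TR_def Phi_eq[OF s] by simp
  define f\<sigma> where "f\<sigma> \<sigma> = (SOME f. pg_iso_map f (G \<sigma>) (\<Phi> (a \<sigma>)))" for \<sigma>
  have fiso: "pg_iso_map (f\<sigma> \<sigma>) (G \<sigma>) (\<Phi> (a \<sigma>))" if s: "\<sigma> \<in> Sig" for \<sigma>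
  proof -
    have ex: "\<exists>f. pg_iso_map f (G \<sigma>) (\<Phi> (a \<sigma>))" using iso[OF s] by (simp add: pg_isomorphic_def)
    show ?thesis unfolding f\<sigma>_def by (rule someI_ex[OF ex])
  qed
  define fl where "fl \<sigma> = map (f\<sigma> \<sigma>) [0..<n]" for \<sigma>
  define Rec where "Rec H L = map (\<lambda>v. map (\<lambda>x. THE y. y < n \<and> L!y = x) (H ! (L!v))) [0..<n]" for H L
  have recG: "Rec (\<Phi> (a \<sigma>)) (fl \<sigma>) = G \<sigma>" if s: "\<sigma> \<in> Sig" for \<sigma>
    using iso_rec[OF fiso[OF s] G_rng[OF s]] unfolding Rec_def fl_def by simp
  define B where "B = {bs::bool list. set bs \<subseteq> UNIV \<and> length bs \<le> s}"
  define AS where "AS = {xs. set xs \<subseteq> B \<and> length xs = n}"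
  define FL where "FL = {xs. set xs \<subseteq> {..<n} \<and> length xs = n}"
  have finB: "finite B" unfolding B_def by (rule finite_lists_length_le) simp
  have cB: "card B < 2^(s+1)" unfolding B_def using sum_pow2_lt[of s]
    by (subst card_lists_length_le) auto
  have cAS: "card AS \<le> (2^(s+1))^n" unfolding AS_def card_lists_length_eq[OF finB]
    using cB by (intro power_mono) auto
  have cFL: "card FL = n^n" unfolding FL_def by (subst card_lists_length_eq) auto
  have fin: "finite (AS \<times> FL)" unfolding AS_def FL_def
    using finite_lists_length_eq[OF finB] finite_lists_length_eq[of "{..<n}"] by simp
  let ?h = "\<lambda>\<sigma>. (a \<sigma>, fl \<sigma>)"
  have inj: "inj_on ?h Sig"
  proof
    fix \<sigma> \<sigma>' assume s: "\<sigma> \<in> Sig" and s': "\<sigma>' \<in> Sig" and e: "?h \<sigma> = ?h \<sigma>'"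
    from e have "a \<sigma> = a \<sigma>'" "fl \<sigma> = fl \<sigma>'" by simp_all
    then have "G \<sigma> = G \<sigma>'" using recG[OF s] recG[OF s'] by simp
    then show "\<sigma> = \<sigma>'" by (rule G_inj[OF s s'])
  qed
  have sub: "?h ` Sig \<subseteq> AS \<times> FL"
  proof
    fix p assume "p \<in> ?h ` Sig"
    then obtain \<sigma> where s: "\<sigma> \<in> Sig" and p: "p = ?h \<sigma>" by blast
    have "length (adv\<sigma> \<sigma> v) \<le> s" if v: "v < n" for v
    proof -
      have "length (adv\<sigma> \<sigma> v) \<le> advice_size (G \<sigma>) (adv\<sigma> \<sigma>)" unfolding advice_size_def
        by (rule Max_ge) (use v in auto)
      then show ?thesis using AD[OF s] by simp
    qed
    then have "a \<sigma> \<in> AS" unfolding AS_def B_def a_def by auto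
    moreover have "fl \<sigma> \<in> FL"
    proof -
      have b: "bij_betw (f\<sigma> \<sigma>) {0..<n} {0..<length (\<Phi> (a \<sigma>))}" using fiso[OF s]
        unfolding pg_iso_map_def by simp
      then have "length (\<Phi> (a \<sigma>)) = n" using bij_betw_same_card[OF b] by simp
      then have "f\<sigma> \<sigma> v < n" if "v < n" for v using bij_betwE[OF b] that by auto
      then show ?thesis unfolding FL_def fl_def by auto
    qed
    ultimately show "p \<in> AS \<times> FL" using p by simp
  qed
  have "card Sig \<le> card (AS \<times> FL)" by (rule card_inj_on_le[OF inj sub fin])
  also have "\<dots> = card AS * card FL" by (rule card_cartesian_product)
  also have "\<dots> \<le> (2^(s+1))^n * n^n" using cAS cFL by simp
  finally show ?thesis unfolding card_Sig .
qed

end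


lemma fact_lb: "(j::nat)^j \<le> fact (2*j)"
proof -
  have e: "fact (2*j) = prod Suc {j..<2*j} * (fact j :: nat)" using fact_split[of j "2*j", where 'a=nat] by (simp del: of_nat_prod add: of_nat_id)
  have "j^j = (\<Prod>i\<in>{j..<2*j}. j)" by simp
  also have "\<dots> \<le> prod Suc {j..<2*j}" by (rule prod_mono) auto
  also have "\<dots> \<le> prod Suc {j..<2*j} * (fact j :: nat)" by simp
  also have "\<dots> = fact (2*j)" using e by simp
  finally show ?thesis .
qed

lemma numeric:
  fixes \<beta> :: real and n m s :: nat
  assumes b0: "0 < \<beta>" and b1: "\<beta> \<le> 1" and nb: "32 / \<beta>^2 \<le> real n" and mb: "\<beta> * n \<le> real m"
    and mn: "m \<le> n" and ineq: "fact (m - 1) ^ m \<le> (2^(s+1))^n * n^n"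
  shows "\<beta>^2/16 * n * log 2 n \<le> real s"
proof -
  define L where "L = log 2 (real n)"
  have l32: "log 2 (32::real) = 5" using log_nat_power[of 2 2 5] by simp
  have l4: "log 2 (4::real) = 2" using log_nat_power[of 2 2 2] by simp
  have b2: "0 < \<beta>^2" "\<beta>^2 \<le> 1" using b0 b1 by (auto simp: power_le_one)
  have nb2: "32 \<le> \<beta>^2 * n" using nb b2 by (simp add: field_simps)
  have "32 / \<beta>^2 \<ge> 32" using b2 by (simp add: field_simps)
  then have n32: "real n \<ge> 32" using nb by linarith
  have bn: "\<beta> * n \<ge> 32"
  proof -
    have "\<beta> * (\<beta> * n) \<ge> 32" using nb2 by (simp add: power2_eq_square mult.assoc)
    moreover have "\<beta> * (\<beta> * n) \<le> \<beta> * n" using b1 b0 n32 by (simp add: mult_left_le_one_le)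
    ultimately show ?thesis by linarith
  qed
  have m4: "real m \<ge> 4" using bn mb by linarith
  then have m4n: "m \<ge> 4" by simp
  define j where "j = (m - 1) div 2"
  have j4: "4 * j \<ge> m" using m4n unfolding j_def by linarith
  have j1: "j \<ge> 1" using m4n unfolding j_def by linarith
  have "j^j \<le> fact (2*j)" by (rule fact_lb)
  also have "\<dots> \<le> fact (m - 1)" by (rule fact_mono) (simp add: j_def)
  finally have F: "real j ^ j \<le> fact (m - 1)" by (metis of_nat_fact of_nat_le_iff of_nat_power)
  have ineqR: "(fact (m - 1) :: real) ^ m \<le> (2^(s+1))^n * real n ^ n"
    using ineq by (metis (mono_tags, opaque_lifting) of_nat_fact of_nat_le_iff of_nat_mult of_nat_numeral of_nat_power)
  have fpos: "(0::real) < fact (m - 1)" by simp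
  have npos: "(0::real) < real n" using n32 by simp
  have "log 2 ((fact (m - 1) :: real) ^ m) \<le> log 2 ((2^(s+1))^n * real n ^ n)"
    using ineqR fpos npos by (subst log_le_cancel_iff) auto
  also have "log 2 ((2^(s+1))^n * real n ^ n) = real n * (real s + 1) + real n * L"
    using npos by (simp add: log_mult log_nat_power L_def algebra_simps)
  finally have A: "real m * log 2 (fact (m - 1)) \<le> real n * (real s + 1) + real n * L"
    using fpos by (simp add: log_nat_power)
  have "real j * log 2 (real j) = log 2 (real j ^ j)" by (simp add: log_nat_power)
  also have "\<dots> \<le> log 2 (fact (m - 1))" using F j1 by (subst log_le_cancel_iff) auto
  finally have B: "real j * log 2 (real j) \<le> log 2 (fact (m - 1))" .
  have L5: "L \<ge> 5 - 2 * log 2 \<beta>"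
  proof -
    have "log 2 (32 / \<beta>^2) \<le> L" unfolding L_def using nb b2 npos by (subst log_le_cancel_iff) auto
    moreover have "log 2 (32 / \<beta>^2) = 5 - 2 * log 2 \<beta>"
      using b0 by (simp add: log_divide log_nat_power l32)
    ultimately show ?thesis by simp
  qed
  have logj: "log 2 (real j) \<ge> L / 2"
  proof -
    have "real m / 4 \<le> real j" using j4 by simp
    then have "\<beta> * n / 4 \<le> real j" using mb by linarith
    then have "log 2 (\<beta> * n / 4) \<le> log 2 (real j)" using b0 npos j1 by (subst log_le_cancel_iff) auto
    moreover have "log 2 (\<beta> * n / 4) = log 2 \<beta> + L - 2"
      using b0 npos by (simp add: log_divide log_mult L_def l4)
    ultimately show ?thesis using L5 by linarith
  qed
  have L1: "L \<ge> 1" unfolding L_def using n32 by simp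
  have mj: "real m * real j \<ge> (\<beta> * n)^2 / 4"
  proof -
    have "(\<beta> * n)^2 \<le> real m * real m" using mb b0 npos by (simp add: power2_eq_square mult_mono)
    also have "\<dots> \<le> real m * (4 * real j)" using j4 by (intro mult_left_mono) (simp_all add: of_nat_mono)
    finally show ?thesis by simp
  qed
  have C: "(\<beta> * n)^2 / 4 * (L / 2) \<le> real m * real j * log 2 (real j)"
    using mj logj L1 by (intro mult_mono) auto
  also have "\<dots> \<le> real m * log 2 (fact (m - 1))" using B by (simp add: mult.assoc mult_left_mono)
  also have "\<dots> \<le> real n * (real s + 1 + L)" using A by (simp add: algebra_simps)
  finally have "real n * (\<beta>^2 * n * L / 8) \<le> real n * (real s + 1 + L)"
    by (simp add: power_mult_distrib power2_eq_square field_simps)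
  then have D: "\<beta>^2 * n * L / 8 \<le> real s + 1 + L" using npos by simp
  have E: "\<beta>^2 * n * L / 16 \<ge> 2 * L" using nb2 L1
  proof -
    have "\<beta>^2 * n * L \<ge> 32 * L" using nb2 L1 by (intro mult_right_mono) auto
    then show ?thesis by simp
  qed
  have E2: "32 * L \<le> \<beta>^2 * n * L" using nb2 L1 by (intro mult_right_mono) auto
  have "\<beta>^2/16 * n * L = (\<beta>^2 * n * L) / 16" by simp
  moreover have "\<beta>^2 * n * L / 8 = (\<beta>^2 * n * L) / 8" by simp
  ultimately have "\<beta>^2/16 * n * L \<le> real s" using D E2 L1 by linarith
  then show ?thesis unfolding L_def .
qed


lemma LL_bound: assumes "n \<ge> 2" shows "real (LL n) \<le> 4 * real n * log 2 (real n)"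
proof -
  have k: "2 ^ (kk n - 1) \<le> n" using kk_le assms by simp
  have "real (kk n - 1) = log 2 (2 ^ (kk n - 1))" by (simp add: log_nat_power)
  also have "\<dots> \<le> log 2 (real n)" using k assms
    by (subst log_le_cancel_iff) (auto simp: of_nat_le_iff[symmetric])
  finally have "real (kk n) \<le> log 2 (real n) + 1" by linarith
  moreover have "log 2 (real n) \<ge> 1" using assms by simp
  ultimately have kb: "real (kk n) \<le> 2 * log 2 (real n)" by linarith
  have "real (LL n) = real (n + 1) * real (kk n)" by (simp add: LL_def algebra_simps)
  also have "\<dots> \<le> (2 * real n) * (2 * log 2 (real n))"
    using kb assms by (intro mult_mono) auto
  finally show ?thesis by simp
qed

theorem corollary5p5:
  fixes \<alpha> :: real
  assumes "0 < \<alpha>" and "\<alpha> < 1"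
  shows "\<exists>c1 c2 :: real. \<exists>N :: nat. c1 > 0 \<and> c2 > 0 \<and>
    (\<forall>n D. n \<ge> N \<longrightarrow> 1 \<le> D \<longrightarrow> real D \<le> \<alpha> * real n \<longrightarrow>
       real (min_advice labeled_TR D (graph_class n D)) \<le> c2 * real n * log 2 (real n) \<and>
       c1 * real n * log 2 (real n) \<le> real (min_advice anon_TR D (graph_class n D)))"
proof -
  define \<beta> where "\<beta> = 1 - \<alpha>"
  have b0: "0 < \<beta>" and b1: "\<beta> \<le> 1" using assms by (auto simp: \<beta>_def)
  have b2: "0 < \<beta>^2" "\<beta>^2 \<le> 1" using b0 b1 by (auto simp: power_le_one)
  define N where "N = nat \<lceil>32 / \<beta>^2\<rceil>"
  show ?thesis
  proof (intro exI conjI allI impI)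
    show "0 < \<beta>^2/16" using b2 by simp
    show "(0::real) < 4" by simp
    fix n D :: nat assume nN: "N \<le> n" and D1: "1 \<le> D" and Da: "real D \<le> \<alpha> * real n"
    have nb: "32 / \<beta>^2 \<le> real n" using nN unfolding N_def by linarith
    have "32 / \<beta>^2 \<ge> 32" using b2 by (simp add: field_simps)
    then have n32: "real n \<ge> 32" using nb by linarith
    then have n2: "n \<ge> 2" by simp
    have Dn: "D < n"
    proof -
      have "\<alpha> * real n < real n" using assms n32 by simp
      then show ?thesis using Da by simp
    qed
    interpret fam n D using D1 Dn by unfold_locales
    show "real (min_advice labeled_TR D (graph_class n D)) \<le> 4 * real n * log 2 (real n)"
      using upper_labeled[of n D] LL_bound[OF n2] n2 by (meson le_trans of_nat_le_iff one_le_numeral order_trans)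
    let ?P = "\<lambda>s. \<exists>A. \<forall>g\<in>graph_class n D. \<exists>adv. advice_size g adv \<le> s \<and> anon_TR A g adv D"
    have ex: "\<exists>s. ?P s" using upper_anon[of n D] n2 by auto
    have "?P (Least ?P)" by (rule LeastI_ex[OF ex])
    then obtain A where hA: "\<forall>g\<in>graph_class n D. \<exists>adv. advice_size g adv \<le> Least ?P \<and> anon_TR A g adv D"
      by blast
    have cnt: "fact (n - D - 1) ^ (n - D) \<le> (2^(Least ?P + 1))^n * n^n" by (rule lower_count[OF hA])
    have mb: "\<beta> * n \<le> real (n - D)" using Da Dn unfolding \<beta>_def by (simp add: of_nat_diff algebra_simps)
    have "\<beta>^2/16 * n * log 2 n \<le> real (Least ?P)"
      by (rule numeric[OF b0 b1 nb mb _ ]) (use cnt in simp_all)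
    then show "\<beta>^2/16 * real n * log 2 (real n) \<le> real (min_advice anon_TR D (graph_class n D))"
      unfolding min_advice_def by simp
  qed
qed

end
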